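(* Let $\mathcal{P}$ be a family of probability distributions on a domain $\mathcal{X}$, let $\theta:\mathcal{P}\to\Theta\subset\mathbb{R}$, let $\alpha\in[0,1]$ and $t:\mathbb{N}\to\mathbb{R}_+$. Suppose $\{P_v\}_{v\in\mathcal{V}}\subset\mathcal{P}$ is a sub-family indexed by $\mathcal{V}=\{0,1\}^\infty$ with parameter separation $\{\delta_k\}_{k\in\mathbb{N}}$, i.e. for all $k\in\mathbb{N}$ and all $v,v'\in\mathcal{V}$ with $v_{1:k}\neq v'_{1:k}$ we have $\delta_k\le|\theta(P_v)-\theta(P_{v'})|$. Suppose $\{\hat\theta_n\}_{n\in\mathbb{N}}$ is an $(\alpha,t(\cdot))$-estimator. Then, for $n_k=\inf\{n: t(n)<\delta_k/2\}$, there exists an $(\alpha,\{n_k\})$-test for the family $\{P_v\}_{v\in\mathcal{V}}$.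
   Context: For $v\in\mathcal{V}=\{0,1\}^\infty$ and $k\le l$, $v_{k:l}=(v_k,\dots,v_l)$. Observations $X_1,X_2,\dots$ are i.i.d. from a distribution $P$; an estimator sequence $\{\hat\theta_n\}$ consists of functions $\hat\theta_n(X_{1:n})$. It is an $(\alpha,t(\cdot))$-estimator if for all $P\in\mathcal{P}$, $\mathbb{P}_{X_i\sim P\text{ i.i.d.}}\big(|\hat\theta_n(X_{1:n})-\theta(P)|\le t(n)\text{ for all }n\in\mathbb{N}\big)\ge1-\alpha$. For a family $\{P_v\}_{v\in\mathcal{V}}$, let $\mathbb{P}_v$ denote the probability under which $X_1,X_2,\dots$ are i.i.d. $P_v$. A sequence of $\{0,1\}$-valued randomized tests $\{\hat V_k\}_{k\in\mathbb{N}}$, with $\hat V_k$ a (randomized) function of $X_{1:n_k}$, is an $(\alpha,\{n_k\})$-test if for all $v\in\mathcal{V}$, $\mathbb{P}_v(\hat V_k(X_{1:n_k})=v_k\text{ for all }k\in\mathbb{N})\ge1-\alpha$. *)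

theory Defs
  imports "HOL-Probability.Probability"
begin

text \<open>Law of an i.i.d. sequence X_1, X_2, ... with X_i distributed as P;
  X_i is the coordinate omega (i - 1).\<close>
definition iid :: "'x measure \<Rightarrow> (nat \<Rightarrow> 'x) measure" where
  "iid P = PiM UNIV (\<lambda>_. P)"

definition sample :: "(nat \<Rightarrow> 'x) \<Rightarrow> nat \<Rightarrow> 'x list" where
  "sample \<omega> n = map \<omega> [0..<n]"

text \<open>(alpha, t)-estimator for theta over the family Ps (distributions on the
  measurable space M). The n-th estimator is a (measurable) function of X_{1:n};
  natural numbers start at 1.\<close>
definition is_estimator ::
  "'x measure \<Rightarrow> 'x measure set \<Rightarrow> ('x measure \<Rightarrow> real) \<Rightarrow> real \<Rightarrow> (nat \<Rightarrow> real)
   \<Rightarrow> (nat \<Rightarrow> 'x list \<Rightarrow> real) \<Rightarrow> bool" where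
  "is_estimator M Ps \<theta> \<alpha> t \<theta>hat \<longleftrightarrow>
     (\<forall>n\<ge>1. (\<lambda>\<omega>. \<theta>hat n (sample \<omega> n)) \<in> borel_measurable (iid M)) \<and>
     (\<forall>P\<in>Ps. measure (iid P)
        {\<omega> \<in> space (iid P). \<forall>n\<ge>1. \<bar>\<theta>hat n (sample \<omega> n) - \<theta> P\<bar> \<le> t n} \<ge> 1 - \<alpha>)"

text \<open>(alpha, {n_k})-test for the family Pv indexed by V = {0,1}^infinity
  (bits v_1, v_2, ...; v 0 is unused). Tests are randomized: V k takes
  X_{1:n_k} and an auxiliary random variable U ~ R independent of the data.\<close>
definition is_test ::
  "'x measure \<Rightarrow> ((nat \<Rightarrow> bool) \<Rightarrow> 'x measure) \<Rightarrow> real \<Rightarrow> (nat \<Rightarrow> nat)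
   \<Rightarrow> real measure \<Rightarrow> (nat \<Rightarrow> 'x list \<Rightarrow> real \<Rightarrow> bool) \<Rightarrow> bool" where
  "is_test M Pv \<alpha> nk R V \<longleftrightarrow>
     prob_space R \<and>
     (\<forall>k\<ge>1. (\<lambda>(\<omega>, u). V k (sample \<omega> (nk k)) u)
               \<in> measurable (iid M \<Otimes>\<^sub>M R) (count_space UNIV)) \<and>
     (\<forall>v. measure (iid (Pv v) \<Otimes>\<^sub>M R)
        {(\<omega>, u) \<in> space (iid (Pv v) \<Otimes>\<^sub>M R). \<forall>k\<ge>1. V k (sample \<omega> (nk k)) u = v k}
          \<ge> 1 - \<alpha>)"

end

theory Submission
  imports Defs
begin

theorem proposition1:
  fixes M :: "'x measure" and Ps :: "'x measure set" and \<theta> :: "'x measure \<Rightarrow> real"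
    and \<alpha> :: real and t :: "nat \<Rightarrow> real"
    and Pv :: "(nat \<Rightarrow> bool) \<Rightarrow> 'x measure" and \<delta> :: "nat \<Rightarrow> real"
    and \<theta>hat :: "nat \<Rightarrow> 'x list \<Rightarrow> real"
  assumes family: "\<forall>P\<in>Ps. prob_space P \<and> sets P = sets M"
    and alpha: "0 \<le> \<alpha>" "\<alpha> \<le> 1"
    and t_nonneg: "\<forall>n. 0 \<le> t n"
    and subfamily: "\<forall>v. Pv v \<in> Ps"
    and separation: "\<forall>k\<ge>1. \<forall>v v'. (\<exists>i\<in>{1..k}. v i \<noteq> v' i) \<longrightarrow>
                        \<delta> k \<le> \<bar>\<theta> (Pv v) - \<theta> (Pv v')\<bar>"
    and estimator: "is_estimator M Ps \<theta> \<alpha> t \<theta>hat"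
    and nk_finite: "\<forall>k\<ge>1. \<exists>n\<ge>1. t n < \<delta> k / 2"
  shows "\<exists>R V. is_test M Pv \<alpha> (\<lambda>k. LEAST n. 1 \<le> n \<and> t n < \<delta> k / 2) R V"
proof -
  define N where "N = (\<lambda>k. LEAST n. 1 \<le> n \<and> t n < \<delta> k / 2)"
  define B where "B = (\<lambda>k. \<Union>w\<in>{w. w k}. ball (\<theta> (Pv w)) (\<delta> k / 2))"
  define V where "V = (\<lambda>k xs (u::real). \<theta>hat (N k) xs \<in> B k)"
  define R where "R = return (borel :: real measure) 0"
  have N: "1 \<le> N k \<and> t (N k) < \<delta> k / 2" if "k \<ge> 1" for k
    unfolding N_def using nk_finite that by (metis (mono_tags, lifting) LeastI)
  have Bopen: "open (B k)" for k unfolding B_def by auto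
  have fmeas: "(\<lambda>\<omega>. \<theta>hat (N k) (sample \<omega> (N k))) \<in> borel_measurable (iid M)" if "k \<ge> 1" for k
    using estimator N[OF that] unfolding is_estimator_def by auto
  have gmeas: "Measurable.pred (iid M) (\<lambda>\<omega>. \<theta>hat (N k) (sample \<omega> (N k)) \<in> B k)" if "k \<ge> 1" for k
    using pred_sets2[OF _ fmeas[OF that], of "B k"] Bopen by auto
  have probR: "prob_space R" unfolding R_def by (rule prob_space_return) simp
  have meas: "(\<lambda>(\<omega>, u). V k (sample \<omega> (N k)) u) \<in> measurable (iid M \<Otimes>\<^sub>M R) (count_space UNIV)"
    if "k \<ge> 1" for k
  proof -
    have "(\<lambda>p. (\<lambda>\<omega>. \<theta>hat (N k) (sample \<omega> (N k)) \<in> B k) (fst p)) \<in> measurable (iid M \<Otimes>\<^sub>M R) (count_space UNIV)"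
      by (rule measurable_compose[OF measurable_fst gmeas[OF that]])
    thus ?thesis unfolding V_def by (simp add: case_prod_beta)
  qed
  have correct: "measure (iid (Pv v) \<Otimes>\<^sub>M R)
        {(\<omega>, u) \<in> space (iid (Pv v) \<Otimes>\<^sub>M R). \<forall>k\<ge>1. V k (sample \<omega> (N k)) u = v k} \<ge> 1 - \<alpha>" for v
  proof -
    let ?P = "Pv v"
    have P: "prob_space ?P" "sets ?P = sets M" using family subfamily by auto
    have setsI: "sets (iid ?P) = sets (iid M)" unfolding iid_def
      by (rule sets_PiM_cong) (use P in auto)
    interpret IP: prob_space "iid ?P" unfolding iid_def by (rule prob_space_PiM) (use P in auto)
    interpret PR: prob_space R by (rule probR)
    define S' where "S' = {\<omega> \<in> space (iid ?P). \<forall>k\<ge>1. (\<theta>hat (N k) (sample \<omega> (N k)) \<in> B k) = v k}"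
    define E where "E = {\<omega> \<in> space (iid ?P). \<forall>n\<ge>1. \<bar>\<theta>hat n (sample \<omega> n) - \<theta> ?P\<bar> \<le> t n}"
    have E: "measure (iid ?P) E \<ge> 1 - \<alpha>" using estimator subfamily unfolding is_estimator_def E_def by auto
    have S'sets: "S' \<in> sets (iid ?P)"
    proof -
      have "Measurable.pred (iid ?P) (\<lambda>\<omega>. \<theta>hat (N k) (sample \<omega> (N k)) \<in> B k)" if "k \<ge> 1" for k
        using gmeas[OF that] measurable_cong_sets[OF setsI refl] by blast
      hence pk: "Measurable.pred (iid ?P) (\<lambda>\<omega>. (\<theta>hat (N k) (sample \<omega> (N k)) \<in> B k) = v k)" if "k \<ge> 1" for k
        using that by measurable
      have "Measurable.pred (iid ?P) (\<lambda>\<omega>. 1 \<le> k \<longrightarrow> (\<theta>hat (N k) (sample \<omega> (N k)) \<in> B k) = v k)" for k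
      proof (cases "1 \<le> k")
        case True
        show ?thesis using pk[OF True] True by simp
      next
        case False
        show ?thesis using False by (simp only: simp_thms) (rule measurable_const, simp)
      qed
      hence "Measurable.pred (iid ?P) (\<lambda>\<omega>. \<forall>k. 1 \<le> k \<longrightarrow> (\<theta>hat (N k) (sample \<omega> (N k)) \<in> B k) = v k)"
        by (rule pred_intros_countable)
      thus ?thesis unfolding S'_def by (simp only: pred_def)
    qed
    have sub: "E \<subseteq> S'"
    proof
      fix \<omega> assume "\<omega> \<in> E"
      hence sp: "\<omega> \<in> space (iid ?P)" and bnd: "\<forall>n\<ge>1. \<bar>\<theta>hat n (sample \<omega> n) - \<theta> ?P\<bar> \<le> t n"
        unfolding E_def by auto
      have "(\<theta>hat (N k) (sample \<omega> (N k)) \<in> B k) = v k" if k: "k \<ge> 1" for k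
      proof -
        let ?x = "\<theta>hat (N k) (sample \<omega> (N k))"
        have "\<bar>?x - \<theta> ?P\<bar> \<le> t (N k)" using bnd N[OF k] by blast
        hence close: "\<bar>?x - \<theta> ?P\<bar> < \<delta> k / 2" using N[OF k] by linarith
        show ?thesis
        proof (cases "v k")
          case True
          hence "?x \<in> ball (\<theta> ?P) (\<delta> k / 2)" using close by (simp add: dist_real_def abs_minus_commute)
          thus ?thesis using True unfolding B_def by blast
        next
          case False
          have "?x \<notin> B k"
          proof
            assume "?x \<in> B k"
            then obtain w where w: "w k" "?x \<in> ball (\<theta> (Pv w)) (\<delta> k / 2)" unfolding B_def by blast
            have "\<exists>i\<in>{1..k}. v i \<noteq> w i" using w(1) False k by auto
            hence "\<delta> k \<le> \<bar>\<theta> ?P - \<theta> (Pv w)\<bar>" using separation k by simp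
            moreover have "\<bar>?x - \<theta> (Pv w)\<bar> < \<delta> k / 2" using w(2) by (simp add: dist_real_def abs_minus_commute)
            ultimately show False using close by linarith
          qed
          thus ?thesis using False by simp
        qed
      qed
      thus "\<omega> \<in> S'" using sp unfolding S'_def by auto
    qed
    have eqS: "{(\<omega>, u) \<in> space (iid ?P \<Otimes>\<^sub>M R). \<forall>k\<ge>1. V k (sample \<omega> (N k)) u = v k} = S' \<times> space R"
      unfolding S'_def V_def by (auto simp: space_pair_measure)
    have "emeasure (iid ?P \<Otimes>\<^sub>M R) (S' \<times> space R) = emeasure (iid ?P) S' * emeasure R (space R)"
      by (rule PR.emeasure_pair_measure_Times[OF S'sets]) simp
    hence "measure (iid ?P \<Otimes>\<^sub>M R) (S' \<times> space R) = measure (iid ?P) S'"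
      by (simp add: measure_def PR.emeasure_space_1)
    moreover have "measure (iid ?P) E \<le> measure (iid ?P) S'"
      by (rule IP.finite_measure_mono[OF sub S'sets])
    ultimately show ?thesis using E eqS by simp
  qed
  have "is_test M Pv \<alpha> N R V"
    unfolding is_test_def using probR meas correct by blast
  thus ?thesis unfolding N_def by blast
qed

end
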